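(* Let $n\ge 2$, let $s_i=(i,i+1)\in S_n$ for $1\le i\le n-1$, and let $\pi:S_n\to\mathrm{O}(V)$ be a real representation. Put $g_\pi=\frac{\chi_\pi(1)-\chi_\pi(s_1)}{2}$. Then there exist elements $x_1,\dots,x_{n-1}\in\mathrm{Pin}(V)$ with $\rho(x_i)=\pi(s_i)$ for all $i$, such that $x_i^2=1$ for $1\le i\le n-1$ and $(x_ix_{i+1})^3=1$ for $1\le i\le n-2$, if and only if $g_\pi\equiv 0$ or $3\pmod 4$.
   Context: $V$ is a Euclidean space, $\chi_\pi$ the character of $\pi$. $\mathrm{Pin}(V)$ is the Pin group of $V$, defined inside the Clifford algebra $C(V)$ (the tensor algebra modulo the ideal generated by $v\otimes v+|v|^2$), and $\rho:\mathrm{Pin}(V)\to\mathrm{O}(V)$ is the standard double cover with kernel $\{\pm 1\}$, under which a unit vector $v$ maps to the reflection in $v^\perp$. *)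

theory Defs
  imports "HOL-Analysis.Analysis" "HOL-Combinatorics.Transposition"
begin

text \<open>Euclidean space V is modelled as real^'m with the standard inner product
(every Euclidean space is isometric to such a space). The Clifford algebra C(V),
i.e. tensor algebra modulo v \<otimes> v + |v|^2, is modelled concretely on its standard
basis e_S indexed by subsets S of the (linearly ordered) index type 'm:
an element is a function 'm set \<Rightarrow> real (its coordinates), and
e_S e_T = (-1)^inv(S,T) (-1)^|S \<inter> T| e_(S \<triangle> T), so that e_i^2 = -1 and
e_i e_j = - e_j e_i for i \<noteq> j.\<close>

type_synonym 'm cl = "'m set \<Rightarrow> real"

definition cl_sign :: "'m::{finite,linorder} set \<Rightarrow> 'm set \<Rightarrow> real" where
  "cl_sign S T = (-1) ^ card {(i, j). i \<in> S \<and> j \<in> T \<and> j < i} * (-1) ^ card (S \<inter> T)"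

definition cl_mult :: "'m::{finite,linorder} cl \<Rightarrow> 'm cl \<Rightarrow> 'm cl" where
  "cl_mult a b = (\<lambda>U. \<Sum>S\<in>UNIV. \<Sum>T\<in>UNIV.
      if (S - T) \<union> (T - S) = U then cl_sign S T * a S * b T else 0)"

definition cl_one :: "'m::{finite,linorder} cl" where
  "cl_one = (\<lambda>U. if U = {} then 1 else 0)"

definition cl_vec :: "real^'m::{finite,linorder} \<Rightarrow> 'm cl" where
  "cl_vec v = (\<lambda>U. \<Sum>i\<in>UNIV. if U = {i} then v $ i else 0)"

definition cl_alpha :: "'m::{finite,linorder} cl \<Rightarrow> 'm cl" where
  "cl_alpha x = (\<lambda>S. (-1) ^ card S * x S)"

definition cl_inverse :: "'m::{finite,linorder} cl \<Rightarrow> 'm cl" where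
  "cl_inverse x = (THE y. cl_mult x y = cl_one \<and> cl_mult y x = cl_one)"

definition Pin :: "'m::{finite,linorder} cl set" where
  "Pin = {foldr cl_mult (map cl_vec us) cl_one | us. \<forall>u\<in>set us. norm u = 1}"

text \<open>The double cover \<rho> : Pin(V) \<rightarrow> O(V) (twisted adjoint action),
\<rho>(x) v = \<alpha>(x) v x^{-1}; for a unit vector u, \<rho>(u) is the reflection in u^\<bottom>.\<close>
definition rho :: "('m::{finite,linorder}) cl \<Rightarrow> real^('m::{finite,linorder}) \<Rightarrow> real^('m::{finite,linorder})" where
  "rho x v = (\<chi> i. cl_mult (cl_mult (cl_alpha x) (cl_vec v)) (cl_inverse x) {i})"

definition orth_rep :: "nat \<Rightarrow> ((nat \<Rightarrow> nat) \<Rightarrow> real^'m::finite \<Rightarrow> real^'m) \<Rightarrow> bool" where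
  "orth_rep n \<pi> \<longleftrightarrow>
     (\<forall>\<sigma>. \<sigma> permutes {1..n} \<longrightarrow> orthogonal_transformation (\<pi> \<sigma>)) \<and>
     (\<forall>\<sigma> \<tau>. \<sigma> permutes {1..n} \<longrightarrow> \<tau> permutes {1..n} \<longrightarrow> \<pi> (\<sigma> \<circ> \<tau>) = \<pi> \<sigma> \<circ> \<pi> \<tau>)"

definition character :: "((nat \<Rightarrow> nat) \<Rightarrow> real^'m::finite \<Rightarrow> real^'m) \<Rightarrow> (nat \<Rightarrow> nat) \<Rightarrow> real" where
  "character \<pi> \<sigma> = trace (matrix (\<pi> \<sigma>))"

definition cl_cube :: "'m::{finite,linorder} cl \<Rightarrow> 'm cl" where
  "cl_cube y = cl_mult (cl_mult y y) y"


definition transp :: "nat \<Rightarrow> nat \<Rightarrow> nat \<Rightarrow> nat" where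
  "transp i j = Transposition.transpose i j"

end

theory Submission
  imports Defs
begin


definition sd :: "'a set \<Rightarrow> 'a set \<Rightarrow> 'a set" where
  "sd A B = (A - B) \<union> (B - A)"

definition sg :: "'a set \<Rightarrow> real" where
  "sg A = (-1) ^ card A"

lemma sg_pm: "sg A = 1 \<or> sg A = -1"
  unfolding sg_def by (cases "even (card A)") auto

lemma sg_sq: "sg A * sg A = 1"
  using sg_pm[of A] by auto

lemma sg_sd: assumes "finite A" "finite B" shows "sg (sd A B) = sg A * sg B"
proof -
  have e1: "A = (A - B) \<union> (A \<inter> B)" by blast
  have "card ((A - B) \<union> (A \<inter> B)) = card (A - B) + card (A \<inter> B)"
    by (rule card_Un_disjoint) (use assms in auto)
  hence c1: "card A = card (A - B) + card (A \<inter> B)" using e1 by simp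
  have e2: "B = (B - A) \<union> (A \<inter> B)" by blast
  have "card ((B - A) \<union> (A \<inter> B)) = card (B - A) + card (A \<inter> B)"
    by (rule card_Un_disjoint) (use assms in auto)
  hence c2: "card B = card (B - A) + card (A \<inter> B)" using e2 by simp
  have c3: "card (sd A B) = card (A - B) + card (B - A)"
    unfolding sd_def using assms by (intro card_Un_disjoint) auto
  have sq: "((-1::real) ^ card (A \<inter> B)) * (-1) ^ card (A \<inter> B) = 1"
    by (cases "even (card (A \<inter> B))") auto
  have "sg A * sg B = (-1) ^ (card (A - B) + card (B - A)) * ((-1) ^ card (A \<inter> B) * (-1) ^ card (A \<inter> B))"
    unfolding sg_def c1 c2 power_add by (simp only: ac_simps)
  also have "\<dots> = (-1) ^ (card (A - B) + card (B - A))"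
    unfolding sq by simp
  finally show ?thesis unfolding sg_def c3 by simp
qed

definition cinv :: "'m::linorder set \<Rightarrow> 'm set \<Rightarrow> ('m \<times> 'm) set" where
  "cinv S T = {(i, j). i \<in> S \<and> j \<in> T \<and> j < i}"

lemma cl_sign_alt: "cl_sign S T = sg (cinv S T) * sg (S \<inter> T)"
  unfolding cl_sign_def sg_def cinv_def by simp

lemma inv_sd1: "cinv (sd S T) W = sd (cinv S W) (cinv T W)"
  unfolding cinv_def sd_def by auto
lemma inv_sd2: "cinv S (sd T W) = sd (cinv S T) (cinv S W)"
  unfolding cinv_def sd_def by auto
lemma int_sd1: "sd S T \<inter> W = sd (S \<inter> W) (T \<inter> W)"
  unfolding sd_def by auto
lemma int_sd2: "S \<inter> sd T W = sd (S \<inter> T) (S \<inter> W)"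
  unfolding sd_def by auto

lemma sign_assoc:
  fixes S T W :: "'m::{finite,linorder} set"
  shows "cl_sign S T * cl_sign (sd S T) W = cl_sign S (sd T W) * cl_sign T W"
proof -
  have e1: "cl_sign (sd S T) W = sg (cinv S W) * sg (cinv T W) * (sg (S \<inter> W) * sg (T \<inter> W))"
    unfolding cl_sign_alt inv_sd1 int_sd1 by (simp add: sg_sd)
  have e2: "cl_sign S (sd T W) = sg (cinv S T) * sg (cinv S W) * (sg (S \<inter> T) * sg (S \<inter> W))"
    unfolding cl_sign_alt inv_sd2 int_sd2 by (simp add: sg_sd)
  show ?thesis unfolding e1 e2 unfolding cl_sign_alt by (simp only: ac_simps)
qed

lemma sign_sq: "cl_sign S T * cl_sign S T = 1"
  unfolding cl_sign_alt by (metis (no_types, lifting) mult.assoc mult.left_commute mult_1 sg_sq)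

lemma sd_assoc: "sd (sd S T) W = sd S (sd T W)" unfolding sd_def by auto
lemma sd_eq_iff: "sd S T = U \<longleftrightarrow> S = sd U T" unfolding sd_def by auto
lemma sd_eq_iff2: "sd S T = U \<longleftrightarrow> T = sd S U" unfolding sd_def by auto
lemma sd_self_r: "sd (sd U T) T = U" unfolding sd_def by auto
lemma sd_empty[simp]: "sd U {} = U" "sd {} U = U" unfolding sd_def by auto
lemma sd_comm: "sd S T = sd T S" unfolding sd_def by auto

definition mm :: "'m::{finite,linorder} set \<Rightarrow> 'm set \<Rightarrow> 'm set \<Rightarrow> real" where
  "mm S T U = (if sd S T = U then cl_sign S T else 0)"

lemma cl_mult_mm: "cl_mult a b U = (\<Sum>S\<in>UNIV. \<Sum>T\<in>UNIV. mm S T U * a S * b T)"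
  unfolding cl_mult_def mm_def sd_def by (intro sum.cong refl) (auto simp: algebra_simps)

lemma mm_sum1: "(\<Sum>R\<in>UNIV. mm S T R * mm R W U) = cl_sign S T * mm (sd S T) W U"
proof -
  have "(\<Sum>R\<in>UNIV. mm S T R * mm R W U) = (\<Sum>R\<in>UNIV. if R = sd S T then cl_sign S T * mm R W U else 0)"
    by (intro sum.cong refl) (auto simp: mm_def)
  thus ?thesis by simp
qed

lemma mm_sum2: "(\<Sum>R\<in>UNIV. mm T W R * mm S R U) = cl_sign T W * mm S (sd T W) U"
proof -
  have "(\<Sum>R\<in>UNIV. mm T W R * mm S R U) = (\<Sum>R\<in>UNIV. if R = sd T W then cl_sign T W * mm S R U else 0)"
    by (intro sum.cong refl) (auto simp: mm_def)
  thus ?thesis by simp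
qed

lemma mm_assoc: "cl_sign S T * mm (sd S T) W U = cl_sign T W * mm S (sd T W) U"
proof -
  have "cl_sign S T * cl_sign (sd S T) W = cl_sign T W * cl_sign S (sd T W)"
    using sign_assoc[of S T W] by (simp add: algebra_simps)
  thus ?thesis unfolding mm_def sd_assoc by simp
qed



lemma swap4: "(\<Sum>r\<in>A. \<Sum>w\<in>B. \<Sum>s\<in>C. \<Sum>t\<in>D. f r w s t) = (\<Sum>s\<in>C. \<Sum>t\<in>D. \<Sum>w\<in>B. \<Sum>r\<in>A. f r w s t)"
proof -
  have "(\<Sum>r\<in>A. \<Sum>w\<in>B. \<Sum>s\<in>C. \<Sum>t\<in>D. f r w s t) = (\<Sum>r\<in>A. \<Sum>s\<in>C. \<Sum>t\<in>D. \<Sum>w\<in>B. f r w s t)"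
  proof (rule sum.cong[OF refl])
    fix r
    have "(\<Sum>w\<in>B. \<Sum>s\<in>C. \<Sum>t\<in>D. f r w s t) = (\<Sum>s\<in>C. \<Sum>w\<in>B. \<Sum>t\<in>D. f r w s t)" by (rule sum.swap)
    also have "\<dots> = (\<Sum>s\<in>C. \<Sum>t\<in>D. \<Sum>w\<in>B. f r w s t)" by (rule sum.cong[OF refl], rule sum.swap)
    finally show "(\<Sum>w\<in>B. \<Sum>s\<in>C. \<Sum>t\<in>D. f r w s t) = (\<Sum>s\<in>C. \<Sum>t\<in>D. \<Sum>w\<in>B. f r w s t)" .
  qed
  also have "\<dots> = (\<Sum>s\<in>C. \<Sum>r\<in>A. \<Sum>t\<in>D. \<Sum>w\<in>B. f r w s t)" by (rule sum.swap)
  also have "\<dots> = (\<Sum>s\<in>C. \<Sum>t\<in>D. \<Sum>r\<in>A. \<Sum>w\<in>B. f r w s t)" by (rule sum.cong[OF refl], rule sum.swap)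
  also have "\<dots> = (\<Sum>s\<in>C. \<Sum>t\<in>D. \<Sum>w\<in>B. \<Sum>r\<in>A. f r w s t)" by (rule sum.cong[OF refl], rule sum.cong[OF refl], rule sum.swap)
  finally show ?thesis .
qed

lemma swap3: "(\<Sum>t\<in>A. \<Sum>w\<in>B. \<Sum>r\<in>C. f t w r) = (\<Sum>r\<in>C. \<Sum>t\<in>A. \<Sum>w\<in>B. f t w r)"
proof -
  have "(\<Sum>t\<in>A. \<Sum>w\<in>B. \<Sum>r\<in>C. f t w r) = (\<Sum>t\<in>A. \<Sum>r\<in>C. \<Sum>w\<in>B. f t w r)"
    by (rule sum.cong[OF refl], rule sum.swap)
  also have "\<dots> = (\<Sum>r\<in>C. \<Sum>t\<in>A. \<Sum>w\<in>B. f t w r)" by (rule sum.swap)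
  finally show ?thesis .
qed

lemma cl_assoc: "cl_mult (cl_mult a b) c = cl_mult a (cl_mult b c)"
proof
  fix U
  have "cl_mult (cl_mult a b) c U = (\<Sum>R\<in>UNIV. \<Sum>W\<in>UNIV. mm R W U * (\<Sum>S\<in>UNIV. \<Sum>T\<in>UNIV. mm S T R * a S * b T) * c W)"
    by (simp add: cl_mult_mm)
  also have "\<dots> = (\<Sum>R\<in>UNIV. \<Sum>W\<in>UNIV. \<Sum>S\<in>UNIV. \<Sum>T\<in>UNIV. a S * b T * c W * (mm S T R * mm R W U))"
    by (simp only: sum_distrib_left sum_distrib_right ac_simps)
  also have "\<dots> = (\<Sum>S\<in>UNIV. \<Sum>T\<in>UNIV. \<Sum>W\<in>UNIV. \<Sum>R\<in>UNIV. a S * b T * c W * (mm S T R * mm R W U))"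
    by (rule swap4)
  also have "\<dots> = (\<Sum>S\<in>UNIV. \<Sum>T\<in>UNIV. \<Sum>W\<in>UNIV. a S * b T * c W * (cl_sign S T * mm (sd S T) W U))"
    by (simp only: sum_distrib_left[symmetric] mm_sum1)
  also have "\<dots> = (\<Sum>S\<in>UNIV. \<Sum>T\<in>UNIV. \<Sum>W\<in>UNIV. a S * b T * c W * (cl_sign T W * mm S (sd T W) U))"
    by (simp only: mm_assoc)
  also have "\<dots> = (\<Sum>S\<in>UNIV. \<Sum>T\<in>UNIV. \<Sum>W\<in>UNIV. \<Sum>R\<in>UNIV. a S * b T * c W * (mm T W R * mm S R U))"
    by (simp only: sum_distrib_left[symmetric] mm_sum2)
  also have "\<dots> = (\<Sum>S\<in>UNIV. \<Sum>R\<in>UNIV. \<Sum>T\<in>UNIV. \<Sum>W\<in>UNIV. a S * b T * c W * (mm T W R * mm S R U))"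
    by (rule sum.cong[OF refl], rule swap3)
  also have "\<dots> = (\<Sum>S\<in>UNIV. \<Sum>R\<in>UNIV. mm S R U * a S * (\<Sum>T\<in>UNIV. \<Sum>W\<in>UNIV. mm T W R * b T * c W))"
    by (simp only: sum_distrib_left sum_distrib_right ac_simps)
  also have "\<dots> = cl_mult a (cl_mult b c) U"
    by (simp add: cl_mult_mm)
  finally show "cl_mult (cl_mult a b) c U = cl_mult a (cl_mult b c) U" .
qed



definition e :: "'m::{finite,linorder} set \<Rightarrow> 'm cl" where
  "e S = (\<lambda>U. if U = S then 1 else 0)"
definition smul :: "real \<Rightarrow> 'm::{finite,linorder} cl \<Rightarrow> 'm cl" where
  "smul c a = (\<lambda>U. c * a U)"
definition cadd :: "'m::{finite,linorder} cl \<Rightarrow> 'm cl \<Rightarrow> 'm cl" where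
  "cadd a b = (\<lambda>U. a U + b U)"

lemma cl_one_e: "cl_one = e {}" unfolding cl_one_def e_def by simp

lemma mult_e_right: "cl_mult a (e T) U = cl_sign (sd U T) T * a (sd U T)"
proof -
  have "cl_mult a (e T) U = (\<Sum>S\<in>UNIV. \<Sum>T'\<in>UNIV. if T' = T then mm S T U * a S else 0)"
    unfolding cl_mult_mm e_def by (intro sum.cong refl) auto
  also have "\<dots> = (\<Sum>S\<in>UNIV. mm S T U * a S)" by simp
  also have "\<dots> = (\<Sum>S\<in>UNIV. if S = sd U T then cl_sign S T * a S else 0)"
    unfolding mm_def by (intro sum.cong refl) (auto simp: sd_eq_iff)
  also have "\<dots> = cl_sign (sd U T) T * a (sd U T)" by simp
  finally show ?thesis .
qed

lemma mult_e_left: "cl_mult (e T) a U = cl_sign T (sd U T) * a (sd U T)"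
proof -
  have "cl_mult (e T) a U = (\<Sum>S\<in>UNIV. if S = T then (\<Sum>T'\<in>UNIV. mm S T' U * a T') else 0)"
    unfolding cl_mult_mm e_def by (intro sum.cong refl) auto
  also have "\<dots> = (\<Sum>T'\<in>UNIV. mm T T' U * a T')" by simp
  also have "\<dots> = (\<Sum>T'\<in>UNIV. if T' = sd U T then cl_sign T T' * a T' else 0)"
    unfolding mm_def by (intro sum.cong refl) (auto simp: sd_def)
  also have "\<dots> = cl_sign T (sd U T) * a (sd U T)" by simp
  finally show ?thesis .
qed

lemma cl_sign_empty[simp]: "cl_sign {} X = 1" "cl_sign X {} = 1"
  unfolding cl_sign_def by simp_all

lemma one_left[simp]: "cl_mult cl_one a = a"
  by (rule ext) (simp add: cl_one_e mult_e_left)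
lemma one_right[simp]: "cl_mult a cl_one = a"
  by (rule ext) (simp add: cl_one_e mult_e_right)

lemma smul_left: "cl_mult (smul c a) b = smul c (cl_mult a b)"
  unfolding smul_def by (rule ext) (simp add: cl_mult_mm sum_distrib_left ac_simps)
lemma smul_right: "cl_mult a (smul c b) = smul c (cl_mult a b)"
  unfolding smul_def by (rule ext) (simp add: cl_mult_mm sum_distrib_left ac_simps)
lemma smul_smul[simp]: "smul c (smul d a) = smul (c * d) a"
  unfolding smul_def by (rule ext) simp
lemma smul_1[simp]: "smul 1 a = a"
  unfolding smul_def by simp
lemma cadd_left: "cl_mult (cadd a b) c = cadd (cl_mult a c) (cl_mult b c)"
  unfolding cadd_def by (rule ext) (simp add: cl_mult_mm sum.distrib algebra_simps)
lemma cadd_right: "cl_mult a (cadd b c) = cadd (cl_mult a b) (cl_mult a c)"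
  unfolding cadd_def by (rule ext) (simp add: cl_mult_mm sum.distrib algebra_simps)

lemma sum_vec: "(\<Sum>S\<in>UNIV. cl_vec v S * F S) = (\<Sum>i\<in>UNIV. v $ i * F {i})"
proof -
  have "(\<Sum>S\<in>UNIV. cl_vec v S * F S) = (\<Sum>S\<in>UNIV. \<Sum>i\<in>UNIV. if S = {i} then v $ i * F S else 0)"
    unfolding cl_vec_def sum_distrib_right by (intro sum.cong refl) auto
  also have "\<dots> = (\<Sum>i\<in>UNIV. \<Sum>S\<in>UNIV. if S = {i} then v $ i * F S else 0)"
    by (rule sum.swap)
  also have "\<dots> = (\<Sum>i\<in>UNIV. v $ i * F {i})" by simp
  finally show ?thesis .
qed

lemma vec_vec: "cl_mult (cl_vec u) (cl_vec w) U = (\<Sum>i\<in>UNIV. \<Sum>j\<in>UNIV. u $ i * w $ j * mm {i} {j} U)"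
proof -
  have "cl_mult (cl_vec u) (cl_vec w) U = (\<Sum>S\<in>UNIV. cl_vec u S * (\<Sum>T\<in>UNIV. cl_vec w T * mm S T U))"
    unfolding cl_mult_mm sum_distrib_left by (simp only: ac_simps)
  also have "\<dots> = (\<Sum>S\<in>UNIV. cl_vec u S * (\<Sum>j\<in>UNIV. w $ j * mm S {j} U))"
    by (simp only: sum_vec)
  also have "\<dots> = (\<Sum>i\<in>UNIV. u $ i * (\<Sum>j\<in>UNIV. w $ j * mm {i} {j} U))"
    by (rule sum_vec)
  finally show ?thesis by (simp add: sum_distrib_left ac_simps)
qed

lemma sign_single: "cl_sign {i} {j} = (if i = j then -1 else if j < i then -1 else 1)"
proof -
  have "{(a, b). a \<in> {i} \<and> b \<in> {j} \<and> b < a} = (if j < i then {(i, j)} else {})" by auto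
  thus ?thesis unfolding cl_sign_def by auto
qed

lemma mm_single: "mm {i} {j} U + mm {j} {i} U = (if i = j \<and> U = {} then -2 else 0)"
  unfolding mm_def sign_single by (auto simp: sd_def)

lemma anticomm_pt: "cl_mult (cl_vec u) (cl_vec w) U + cl_mult (cl_vec w) (cl_vec u) U = (if U = {} then -2 * (u \<bullet> w) else 0)"
proof -
  have "cl_mult (cl_vec w) (cl_vec u) U = (\<Sum>j\<in>UNIV. \<Sum>i\<in>UNIV. w $ j * u $ i * mm {j} {i} U)"
    by (rule vec_vec)
  also have "\<dots> = (\<Sum>i\<in>UNIV. \<Sum>j\<in>UNIV. w $ j * u $ i * mm {j} {i} U)" by (rule sum.swap)
  finally have "cl_mult (cl_vec u) (cl_vec w) U + cl_mult (cl_vec w) (cl_vec u) U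
     = (\<Sum>i\<in>UNIV. \<Sum>j\<in>UNIV. u $ i * w $ j * (mm {i} {j} U + mm {j} {i} U))"
    by (simp add: vec_vec sum.distrib[symmetric] algebra_simps)
  also have "\<dots> = (\<Sum>i\<in>UNIV. \<Sum>j\<in>UNIV. if j = i then (if U = {} then -2 * (u $ i * w $ i) else 0) else 0)"
    unfolding mm_single by (intro sum.cong refl) auto
  also have "\<dots> = (if U = {} then -2 * (u \<bullet> w) else 0)"
    by (simp add: inner_vec_def sum_distrib_left)
  finally show ?thesis .
qed

lemma anticomm: "cl_mult (cl_vec u) (cl_vec w) = cadd (smul (-1) (cl_mult (cl_vec w) (cl_vec u))) (smul (-2 * (u \<bullet> w)) cl_one)"
proof
  fix U show "cl_mult (cl_vec u) (cl_vec w) U = cadd (smul (-1) (cl_mult (cl_vec w) (cl_vec u))) (smul (-2 * (u \<bullet> w)) cl_one) U"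
  proof (cases "U = {}")
    case True then show ?thesis using anticomm_pt[of u w U] unfolding cadd_def smul_def cl_one_def
      by simp
  next
    case False
    then have "(if U = {} then (1::real) else 0) = 0" "(if U = {} then -2*(u \<bullet> w) else 0) = 0" by simp_all
    then show ?thesis using anticomm_pt[of u w U] unfolding cadd_def smul_def cl_one_def
      by simp
  qed
qed

lemma vec_sq: "cl_mult (cl_vec u) (cl_vec u) = smul (- (u \<bullet> u)) cl_one"
proof
  fix U show "cl_mult (cl_vec u) (cl_vec u) U = smul (- (u \<bullet> u)) cl_one U"
  proof (cases "U = {}")
    case True then show ?thesis using anticomm_pt[of u u U] unfolding smul_def cl_one_def
      by simp
  next
    case False
    then have "(if U = {} then (1::real) else 0) = 0" "(if U = {} then -2*(u \<bullet> u) else 0) = 0" by simp_all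
    then show ?thesis using anticomm_pt[of u u U] unfolding smul_def cl_one_def
      by simp
  qed
qed

lemma vec_unit_sq: "norm u = 1 \<Longrightarrow> cl_mult (cl_vec u) (cl_vec u) = smul (-1) cl_one"
  by (simp add: vec_sq dot_square_norm)

lemma vec_lin: "cl_vec (a - c *\<^sub>R b) = cadd (cl_vec a) (smul (- c) (cl_vec b))"
  unfolding cl_vec_def cadd_def smul_def
  by (rule ext) (simp add: sum.distrib[symmetric] sum_distrib_left, intro sum.cong refl, auto)

lemma vec_neg: "cl_vec (- a) = smul (-1) (cl_vec a)"
  unfolding cl_vec_def smul_def
  by (rule ext) (simp add: sum_distrib_left, intro sum.cong refl, auto)

lemma cadd_smul_e: "cadd a (smul c cl_one) = cadd b (smul d cl_one) \<Longrightarrow> True" by simp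

lemma refl_lemma:
  assumes "norm u = 1"
  shows "cl_mult (cl_mult (cl_vec u) (cl_vec w)) (cl_vec u) = cl_vec (w - (2 * (u \<bullet> w)) *\<^sub>R u)"
proof -
  have "cl_mult (cl_mult (cl_vec u) (cl_vec w)) (cl_vec u)
      = cadd (smul (-1) (cl_mult (cl_vec w) (cl_mult (cl_vec u) (cl_vec u)))) (smul (-2 * (u \<bullet> w)) (cl_vec u))"
    by (simp add: anticomm[of u w] cadd_left smul_left cl_assoc)
  also have "\<dots> = cadd (cl_vec w) (smul (-2 * (u \<bullet> w)) (cl_vec u))"
    by (simp add: vec_unit_sq[OF assms] smul_right)
  also have "\<dots> = cl_vec (w - (2 * (u \<bullet> w)) *\<^sub>R u)"
    by (simp add: vec_lin)
  finally show ?thesis .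
qed

lemma alpha_mult: "cl_alpha (cl_mult a b) = cl_mult (cl_alpha a) (cl_alpha b)"
proof
  fix U
  have "cl_alpha (cl_mult a b) U = (\<Sum>S\<in>UNIV. \<Sum>T\<in>UNIV. sg U * (mm S T U * a S * b T))"
    unfolding cl_alpha_def cl_mult_mm sg_def[symmetric] sum_distrib_left ..
  also have "\<dots> = (\<Sum>S\<in>UNIV. \<Sum>T\<in>UNIV. mm S T U * (sg S * a S) * (sg T * b T))"
    by (intro sum.cong refl) (auto simp: mm_def sg_sd)
  also have "\<dots> = cl_mult (cl_alpha a) (cl_alpha b) U"
    unfolding cl_alpha_def cl_mult_mm sg_def ..
  finally show "cl_alpha (cl_mult a b) U = cl_mult (cl_alpha a) (cl_alpha b) U" .
qed

lemma alpha_vec: "cl_alpha (cl_vec v) = smul (-1) (cl_vec v)"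
  unfolding cl_alpha_def cl_vec_def smul_def
  by (rule ext) (simp add: sum_distrib_left, intro sum.cong refl, auto)

lemma alpha_one: "cl_alpha cl_one = cl_one"
  unfolding cl_alpha_def cl_one_def by auto

lemma alpha_smul: "cl_alpha (smul c a) = smul c (cl_alpha a)"
  unfolding cl_alpha_def smul_def by auto



definition pl :: "(real^'m::{finite,linorder}) list \<Rightarrow> 'm cl" where
  "pl us = foldr cl_mult (map cl_vec us) cl_one"
definition ipl :: "(real^'m::{finite,linorder}) list \<Rightarrow> 'm cl" where
  "ipl us = pl (rev (map uminus us))"
definition rfl :: "real^'m \<Rightarrow> real^'m \<Rightarrow> real^'m" where
  "rfl u v = v - (2 * (u \<bullet> v)) *\<^sub>R u"
definition Rl :: "(real^('m::{finite,linorder})) list \<Rightarrow> real^('m::{finite,linorder}) \<Rightarrow> real^('m::{finite,linorder})" where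
  "Rl us = foldr (\<lambda>u f. rfl u \<circ> f) us id"
definition unitl :: "(real^'m::{finite,linorder}) list \<Rightarrow> bool" where
  "unitl us \<longleftrightarrow> (\<forall>u\<in>set us. norm u = 1)"

lemma pl_Nil[simp]: "pl [] = cl_one" unfolding pl_def by simp
lemma pl_Cons[simp]: "pl (u # us) = cl_mult (cl_vec u) (pl us)" unfolding pl_def by simp
lemma Rl_Nil[simp]: "Rl [] = id" unfolding Rl_def by simp
lemma Rl_Cons[simp]: "Rl (u # us) = rfl u \<circ> Rl us" unfolding Rl_def by simp
lemma unitl_simps[simp]: "unitl []" "unitl (u # us) \<longleftrightarrow> norm u = 1 \<and> unitl us"
  "unitl (us @ vs) \<longleftrightarrow> unitl us \<and> unitl vs" "unitl (rev us) = unitl us"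
  "unitl (map uminus us) = unitl us"
  unfolding unitl_def by auto

lemma pl_append: "pl (us @ vs) = cl_mult (pl us) (pl vs)"
  by (induction us) (simp_all add: cl_assoc)

lemma Rl_append: "Rl (us @ vs) = Rl us \<circ> Rl vs"
  by (induction us) (simp_all add: comp_assoc)

lemma pl_single: "pl [u] = cl_vec u" by simp

lemma ipl_Cons: "ipl (u # us) = cl_mult (ipl us) (cl_vec (- u))"
  unfolding ipl_def by (simp add: pl_append)
lemma ipl_Nil[simp]: "ipl [] = cl_one" unfolding ipl_def by simp

lemma smul_m1_m1[simp]: "smul (-1) (smul (-1) a) = a" by simp

lemma pl_ipl: "unitl us \<Longrightarrow> cl_mult (pl us) (ipl us) = cl_one"
proof (induction us)
  case Nil then show ?case by simp
next
  case (Cons u us)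
  have "cl_mult (pl (u # us)) (ipl (u # us)) = cl_mult (cl_vec u) (cl_mult (cl_mult (pl us) (ipl us)) (cl_vec (- u)))"
    by (simp add: ipl_Cons cl_assoc)
  also have "\<dots> = cl_one" using Cons by (simp add: vec_neg smul_right vec_unit_sq)
  finally show ?case .
qed

lemma ipl_pl: "unitl us \<Longrightarrow> cl_mult (ipl us) (pl us) = cl_one"
proof (induction us)
  case Nil then show ?case by simp
next
  case (Cons u us)
  have "cl_mult (ipl (u # us)) (pl (u # us)) = cl_mult (ipl us) (cl_mult (cl_mult (cl_vec (- u)) (cl_vec u)) (pl us))"
    by (simp add: ipl_Cons cl_assoc)
  also have "\<dots> = cl_one" using Cons by (simp add: vec_neg smul_left smul_right vec_unit_sq)
  finally show ?case .
qed

lemma inverse_unique: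
  assumes "cl_mult x y = cl_one" "cl_mult y x = cl_one"
  shows "cl_inverse x = y"
  unfolding cl_inverse_def
proof (rule the_equality)
  show "cl_mult x y = cl_one \<and> cl_mult y x = cl_one" using assms by simp
  fix z assume "cl_mult x z = cl_one \<and> cl_mult z x = cl_one"
  then have "z = cl_mult z (cl_mult x y)" using assms by simp
  also have "\<dots> = cl_mult (cl_mult z x) y" by (simp add: cl_assoc)
  also have "\<dots> = y" using \<open>cl_mult x z = cl_one \<and> cl_mult z x = cl_one\<close> by simp
  finally show "z = y" .
qed

lemma inverse_pl: "unitl us \<Longrightarrow> cl_inverse (pl us) = ipl us"
  by (intro inverse_unique pl_ipl ipl_pl)

lemma alpha_pl: "cl_alpha (pl us) = smul ((-1) ^ length us) (pl us)"
  by (induction us) (simp_all add: alpha_one alpha_mult alpha_vec smul_left smul_right)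

lemma vec_coord: "cl_vec w {i} = w $ i"
  unfolding cl_vec_def by simp

lemma rho_formula:
  assumes "unitl us"
  shows "cl_mult (cl_mult (cl_alpha (pl us)) (cl_vec v)) (ipl us) = cl_vec (Rl us v)"
  using assms
proof (induction us)
  case Nil then show ?case by (simp add: alpha_one)
next
  case (Cons u us)
  let ?A = "cl_alpha (pl us)" and ?Q = "ipl us"
  have IH: "cl_mult (cl_mult ?A (cl_vec v)) ?Q = cl_vec (Rl us v)" using Cons by simp
  have "cl_mult (cl_mult (cl_alpha (pl (u # us))) (cl_vec v)) (ipl (u # us))
      = cl_mult (cl_mult (cl_vec u) (cl_mult (cl_mult ?A (cl_vec v)) ?Q)) (cl_vec u)"
    by (simp add: alpha_mult alpha_vec ipl_Cons vec_neg smul_left smul_right cl_assoc)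
  also have "\<dots> = cl_vec (rfl u (Rl us v))"
    unfolding IH rfl_def using Cons.prems by (simp add: refl_lemma)
  finally show ?case by simp
qed

lemma rho_pl: "unitl us \<Longrightarrow> rho (pl us) = Rl us"
  by (rule ext) (simp add: rho_def inverse_pl rho_formula vec_coord)

lemma rfl_neg[simp]: "rfl (- u) = rfl u"
  unfolding rfl_def by (rule ext) simp

lemma rfl_invol: "norm u = 1 \<Longrightarrow> rfl u (rfl u v) = v"
proof -
  assume "norm u = 1"
  then have uu: "u \<bullet> u = 1" by (simp add: dot_square_norm)
  have "u \<bullet> rfl u v = - (u \<bullet> v)" unfolding rfl_def by (simp add: inner_diff_right uu)
  then show ?thesis unfolding rfl_def[of u "rfl u v"] by (simp add: rfl_def)
qed

lemma Rl_inv: "unitl us \<Longrightarrow> Rl us \<circ> Rl (rev (map uminus us)) = id"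
proof (induction us)
  case Nil then show ?case by simp
next
  case (Cons u us)
  have "Rl (u # us) \<circ> Rl (rev (map uminus (u # us))) = rfl u \<circ> (Rl us \<circ> Rl (rev (map uminus us))) \<circ> rfl u"
    by (simp add: Rl_append comp_assoc)
  also have "\<dots> = id"
  proof -
    have h: "Rl us (Rl (rev (map uminus us)) a) = a" for a
      using Cons by (metis comp_apply id_apply unitl_simps(2))
    show ?thesis using Cons.prems by (intro ext) (simp add: h rfl_invol)
  qed
  finally show ?case .
qed

lemma Pin_iff: "x \<in> Pin \<longleftrightarrow> (\<exists>us. unitl us \<and> x = pl us)"
  unfolding Pin_def pl_def unitl_def by blast

lemma Pin_mult: "x \<in> Pin \<Longrightarrow> y \<in> Pin \<Longrightarrow> cl_mult x y \<in> Pin"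
proof -
  assume "x \<in> Pin" "y \<in> Pin"
  then obtain us vs where "unitl us" "x = pl us" "unitl vs" "y = pl vs" unfolding Pin_iff by blast
  then have "unitl (us @ vs) \<and> cl_mult x y = pl (us @ vs)" by (simp add: pl_append)
  then show ?thesis unfolding Pin_iff by (intro exI[of _ "us @ vs"])
qed

lemma rho_mult: "x \<in> Pin \<Longrightarrow> y \<in> Pin \<Longrightarrow> rho (cl_mult x y) = rho x \<circ> rho y"
proof -
  assume "x \<in> Pin" "y \<in> Pin"
  then obtain us vs where "unitl us" "x = pl us" "unitl vs" "y = pl vs" unfolding Pin_iff by blast
  then show ?thesis by (simp add: pl_append[symmetric] rho_pl Rl_append)
qed

lemma some_unit: "\<exists>u::real^'m::{finite,linorder}. norm u = 1"
  using norm_axis_1[of undefined] by blast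

lemma Pin_neg: fixes x :: "'m::{finite,linorder} cl" shows "x \<in> Pin \<Longrightarrow> smul (-1) x \<in> Pin \<and> rho (smul (-1) x) = rho x"
proof -
  assume "x \<in> Pin"
  then obtain us where us: "unitl us" "x = pl us" unfolding Pin_iff by blast
  obtain u :: "real^('m::{finite,linorder})" where u: "norm u = 1" using some_unit by blast
  have "pl (u # u # us) = cl_mult (cl_mult (cl_vec u) (cl_vec u)) (pl us)" by (simp add: cl_assoc)
  also have "\<dots> = smul (-1) x" using us by (simp add: vec_unit_sq[OF u] smul_left)
  finally have p: "pl (u # u # us) = smul (-1) x" .
  have r: "Rl (u # u # us) = Rl us" by (rule ext) (simp add: rfl_invol[OF u])
  have uu: "unitl (u # u # us)" using us u by simp
  have "smul (-1) x \<in> Pin" unfolding Pin_iff by (intro exI[of _ "u # u # us"] conjI uu p[symmetric])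
  moreover have "rho (smul (-1) x) = rho x"
  proof -
    have "rho (pl (u # u # us)) = Rl (u # u # us)" by (rule rho_pl[OF uu])
    then show ?thesis using p r rho_pl[OF us(1)] us(2) by simp
  qed
  ultimately show ?thesis by blast
qed

lemma one_Pin: "cl_one \<in> Pin" unfolding Pin_iff by (rule exI[of _ "[]"]) simp



lemma sg_image: "inj_on f A \<Longrightarrow> sg (f ` A) = sg A"
  unfolding sg_def by (simp add: card_image)

lemma sign_swap:
  fixes S :: "'m::{finite,linorder} set"
  assumes "i \<in> S"
  shows "cl_sign S {i} * cl_sign {i} S = - sg S"
proof -
  let ?A = "{a\<in>S. i < a}" and ?B = "{b\<in>S. b < i}"
  have a: "cinv S {i} = (\<lambda>a. (a, i)) ` ?A" unfolding cinv_def by auto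
  have b: "cinv {i} S = (\<lambda>b. (i, b)) ` ?B" unfolding cinv_def by auto
  have sa: "sg (cinv S {i}) = sg ?A" unfolding a by (rule sg_image) (auto simp: inj_on_def)
  have sb: "sg (cinv {i} S) = sg ?B" unfolding b by (rule sg_image) (auto simp: inj_on_def)
  have ab: "sd ?A ?B = S - {i}" unfolding sd_def using assms by auto
  have "sg ?A * sg ?B = sg (S - {i})" unfolding ab[symmetric] by (simp add: sg_sd)
  also have "\<dots> = - sg S"
  proof -
    have "card S = Suc (card (S - {i}))" by (rule card_Suc_Diff1[symmetric]) (use assms in auto)
    then show ?thesis unfolding sg_def by simp
  qed
  finally have *: "sg ?A * sg ?B = - sg S" .
  have "cl_sign S {i} * cl_sign {i} S = (sg (cinv S {i}) * sg (cinv {i} S)) * (sg (S \<inter> {i}) * sg (S \<inter> {i}))"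
    unfolding cl_sign_alt by (simp add: Int_commute ac_simps)
  also have "\<dots> = - sg S" unfolding sg_sq sa sb * by simp
  finally show ?thesis .
qed

lemma vec_axis: "cl_vec (axis i 1) = e {i}"
proof (rule ext)
  fix U
  have "cl_vec (axis i 1) U = (\<Sum>j\<in>UNIV. if j = i then (if U = {i} then 1 else 0) else 0)"
    unfolding cl_vec_def by (intro sum.cong refl) (auto simp: axis_def)
  then show "cl_vec (axis i 1) U = e {i} U" unfolding e_def by simp
qed

lemma e_sq: fixes i :: "'m::{finite,linorder}" shows "cl_mult (e {i}) (e {i}) = smul (-1) (cl_one :: 'm cl)"
  using vec_unit_sq[of "axis i (1::real)"] by (simp add: vec_axis norm_axis_1)

definition bf :: "'m::{finite,linorder} cl \<Rightarrow> 'm cl \<Rightarrow> real" where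
  "bf a b = (\<Sum>S\<in>UNIV. a S * b S)"

lemma bf_e: "bf (cl_mult (e {i}) a) (cl_mult (e {i}) b) = bf a b"
proof -
  have "bf (cl_mult (e {i}) a) (cl_mult (e {i}) b) = (\<Sum>U\<in>UNIV. a (sd U {i}) * b (sd U {i}))"
    unfolding bf_def mult_e_left
    by (intro sum.cong refl) (metis (no_types, lifting) mult.assoc mult.left_commute mult_1 sign_sq)
  also have "\<dots> = bf a b" unfolding bf_def
    by (rule sum.reindex_bij_witness[of UNIV "\<lambda>U. sd U {i}" "\<lambda>U. sd U {i}"]) (auto simp: sd_self_r)
  finally show ?thesis .
qed

lemma bf_smul_r: "bf a (smul c b) = c * bf a b"
  unfolding bf_def smul_def by (simp add: sum_distrib_left ac_simps)

lemma bf_e_skew: "bf (cl_mult (e {i}) a) b = - bf a (cl_mult (e {i}) b)"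
proof -
  have "bf a (cl_mult (e {i}) b) = bf (cl_mult (e {i}) a) (cl_mult (e {i}) (cl_mult (e {i}) b))"
    by (simp add: bf_e)
  also have "\<dots> = - bf (cl_mult (e {i}) a) b"
    by (simp add: cl_assoc[symmetric] e_sq smul_left bf_smul_r)
  finally show ?thesis by simp
qed

lemma mult_expand: "cl_mult c a U = (\<Sum>S\<in>UNIV. c S * (\<Sum>T\<in>UNIV. mm S T U * a T))"
  unfolding cl_mult_mm by (simp add: sum_distrib_left ac_simps)

lemma vec_mult_expand: "cl_mult (cl_vec u) a U = (\<Sum>i\<in>UNIV. u $ i * cl_mult (e {i}) a U)"
proof -
  have "cl_mult (cl_vec u) a U = (\<Sum>i\<in>UNIV. u $ i * (\<Sum>T\<in>UNIV. mm {i} T U * a T))"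
    unfolding mult_expand by (rule sum_vec)
  also have "\<dots> = (\<Sum>i\<in>UNIV. u $ i * cl_mult (e {i}) a U)"
  proof (intro sum.cong refl)
    fix i
    have "cl_mult (e {i}) a U = (\<Sum>S\<in>UNIV. if S = {i} then (\<Sum>T\<in>UNIV. mm S T U * a T) else 0)"
      unfolding mult_expand e_def by (intro sum.cong refl) auto
    then show "u $ i * (\<Sum>T\<in>UNIV. mm {i} T U * a T) = u $ i * cl_mult (e {i}) a U" by simp
  qed
  finally show ?thesis .
qed

lemma bf_vec_skew: "bf (cl_mult (cl_vec u) a) b = - bf a (cl_mult (cl_vec u) b)"
proof -
  have "bf (cl_mult (cl_vec u) a) b = (\<Sum>i\<in>UNIV. u $ i * bf (cl_mult (e {i}) a) b)"
    unfolding bf_def vec_mult_expand sum_distrib_right sum_distrib_left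
    by (subst sum.swap) (simp add: ac_simps)
  also have "\<dots> = - (\<Sum>i\<in>UNIV. u $ i * bf a (cl_mult (e {i}) b))"
    by (simp add: bf_e_skew sum_negf)
  also have "(\<Sum>i\<in>UNIV. u $ i * bf a (cl_mult (e {i}) b)) = bf a (cl_mult (cl_vec u) b)"
    unfolding bf_def vec_mult_expand sum_distrib_right sum_distrib_left
    by (subst sum.swap) (simp add: ac_simps)
  finally show ?thesis .
qed

lemma bf_vec_unit: "norm u = 1 \<Longrightarrow> bf (cl_mult (cl_vec u) a) (cl_mult (cl_vec u) a) = bf a a"
  by (simp add: bf_vec_skew cl_assoc[symmetric] vec_unit_sq smul_left bf_smul_r)

lemma bf_one: "bf cl_one cl_one = 1"
  unfolding bf_def cl_one_def by (simp add: if_distrib cong: if_cong)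

lemma bf_pl: "unitl us \<Longrightarrow> bf (pl us) (pl us) = 1"
  by (induction us) (simp_all add: bf_one bf_vec_unit)

lemma kernel:
  fixes us :: "(real^('m::{finite,linorder})) list"
  assumes u: "unitl us" and r: "Rl us = id"
  shows "pl us = cl_one \<or> pl us = smul (-1) cl_one"
proof -
  let ?x = "pl us" and ?k = "length us"
  have h1: "cl_mult (cl_alpha ?x) (cl_vec v) = cl_mult (cl_vec v) ?x" for v
  proof -
    have "cl_mult (cl_mult (cl_alpha ?x) (cl_vec v)) (ipl us) = cl_vec v"
      using rho_formula[OF u, of v] r by simp
    then have "cl_mult (cl_mult (cl_mult (cl_alpha ?x) (cl_vec v)) (ipl us)) ?x = cl_mult (cl_vec v) ?x"
      by simp
    then show ?thesis by (simp add: cl_assoc ipl_pl[OF u])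
  qed
  have h2: "smul ((-1) ^ ?k) (cl_mult ?x (e {i})) = cl_mult (e {i}) ?x" for i
    using h1[of "axis i 1"] by (simp add: alpha_pl smul_left vec_axis)
  have h3: "(-1) ^ ?k * (cl_sign S {i} * ?x S) = cl_sign {i} S * ?x S" for S i
  proof -
    have "smul ((-1) ^ ?k) (cl_mult ?x (e {i})) (sd S {i}) = cl_mult (e {i}) ?x (sd S {i})"
      using h2[of i] by simp
    then show ?thesis unfolding smul_def mult_e_left mult_e_right sd_self_r .
  qed
  have h4: "sg S * ?x S = (-1) ^ ?k * ?x S" for S
  proof -
    have "cl_alpha ?x S = smul ((-1) ^ ?k) ?x S" using alpha_pl[of us] by simp
    then show ?thesis unfolding cl_alpha_def smul_def sg_def .
  qed
  have h5: "?x S = 0" if ne: "S \<noteq> {}" for S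
  proof (rule ccontr)
    assume nz: "?x S \<noteq> 0"
    obtain i where i: "i \<in> S" using ne by blast
    have "(-1) ^ ?k * cl_sign S {i} = cl_sign {i} S" using h3[of S i] nz by simp
    then have "(-1) ^ ?k * (cl_sign S {i} * cl_sign S {i}) = cl_sign S {i} * cl_sign {i} S"
      by (metis mult.assoc mult.commute)
    then have "(-1) ^ ?k = - sg S" using sign_swap[OF i] sign_sq[of S "{i}"] by simp
    moreover have "sg S = (-1) ^ ?k" using h4[of S] nz by simp
    ultimately show False by simp
  qed
  define c where "c = ?x {}"
  have xs: "?x = smul c cl_one"
    by (rule ext) (auto simp: smul_def cl_one_def h5 c_def)
  have "bf (smul c cl_one) (smul c (cl_one::'m cl)) = 1" using bf_pl[OF u] unfolding xs .
  then have "c * c = 1"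
    unfolding bf_def smul_def cl_one_def by (simp add: if_distrib cong: if_cong)
  then have "c = 1 \<or> c = -1"
    by (metis (no_types, opaque_lifting) minus_mult_minus mult_cancel_left2 mult_minus_left square_eq_1_iff)
  then show ?thesis using xs by auto
qed

lemma kernel_Pin:
  fixes x :: "'m::{finite,linorder} cl"
  assumes "x \<in> Pin" "rho x = id"
  shows "x = cl_one \<or> x = smul (-1) cl_one"
proof -
  obtain us where "unitl us" "x = pl us" using assms(1) unfolding Pin_iff by blast
  then show ?thesis using kernel[of us] assms(2) rho_pl by metis
qed



definition orthl :: "(real^('m::{finite,linorder})) list \<Rightarrow> bool" where
  "orthl fs \<longleftrightarrow> distinct fs \<and> unitl fs \<and> (\<forall>f\<in>set fs. \<forall>g\<in>set fs. f \<noteq> g \<longrightarrow> f \<bullet> g = 0)"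

lemma orthl_Cons: "orthl (f # fs) \<Longrightarrow> orthl fs \<and> norm f = 1 \<and> (\<forall>g\<in>set fs. f \<bullet> g = 0) \<and> f \<notin> set fs"
  unfolding orthl_def by auto

lemma anti_orth: "f \<bullet> g = 0 \<Longrightarrow> cl_mult (cl_vec f) (cl_vec g) = smul (-1) (cl_mult (cl_vec g) (cl_vec f))"
  by (rule ext) (simp add: anticomm[of f g] cadd_def smul_def)

lemma vec_pl_comm:
  "(\<forall>g\<in>set gs. f \<bullet> g = 0) \<Longrightarrow> cl_mult (cl_vec f) (pl gs) = smul ((-1) ^ length gs) (cl_mult (pl gs) (cl_vec f))"
proof (induction gs)
  case Nil then show ?case by simp
next
  case (Cons g gs)
  have "cl_mult (cl_vec f) (pl (g # gs)) = cl_mult (cl_mult (cl_vec f) (cl_vec g)) (pl gs)"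
    by (simp add: cl_assoc)
  also have "\<dots> = smul (-1) (cl_mult (cl_vec g) (cl_mult (cl_vec f) (pl gs)))"
    using Cons.prems by (simp add: anti_orth smul_left cl_assoc)
  also have "\<dots> = smul ((-1) ^ length (g # gs)) (cl_mult (pl (g # gs)) (cl_vec f))"
    using Cons by (simp add: smul_right cl_assoc)
  finally show ?case .
qed

fun ssg :: "nat \<Rightarrow> real" where
  "ssg 0 = 1"
| "ssg (Suc m) = (-1) ^ (Suc m) * ssg m"

lemma pl_sq: "orthl fs \<Longrightarrow> cl_mult (pl fs) (pl fs) = smul (ssg (length fs)) cl_one"
proof (induction fs)
  case Nil then show ?case by simp
next
  case (Cons f fs)
  note h = orthl_Cons[OF Cons.prems]
  let ?P = "pl fs" and ?s = "(-1::real) ^ length fs"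
  have "cl_mult (pl (f # fs)) (pl (f # fs)) = cl_mult (cl_mult (cl_vec f) ?P) (cl_mult (cl_vec f) ?P)"
    by simp
  also have "\<dots> = smul ?s (cl_mult (cl_mult ?P (cl_vec f)) (cl_mult (cl_vec f) ?P))"
    using h by (simp add: vec_pl_comm smul_left)
  also have "\<dots> = smul ?s (cl_mult ?P (cl_mult (cl_mult (cl_vec f) (cl_vec f)) ?P))"
    by (simp add: cl_assoc)
  also have "\<dots> = smul (- ?s) (cl_mult ?P ?P)"
    using h by (simp add: vec_unit_sq smul_left smul_right)
  also have "\<dots> = smul (ssg (length (f # fs))) cl_one"
    using Cons.IH h by simp
  finally show ?case .
qed

lemma ssg_mod4: "ssg m = (if m mod 4 = 0 \<or> m mod 4 = 3 then 1 else -1)"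
proof (induction m)
  case 0 then show ?case by simp
next
  case (Suc m)
  have "m mod 4 = 0 \<or> m mod 4 = 1 \<or> m mod 4 = 2 \<or> m mod 4 = 3" by arith
  moreover have "even (Suc m) \<longleftrightarrow> m mod 4 = 1 \<or> m mod 4 = 3" by presburger
  moreover have "Suc m mod 4 = (if m mod 4 = 3 then 0 else Suc (m mod 4))" by presburger
  ultimately show ?case using Suc by (auto simp: neg_one_even_power neg_one_odd_power)
qed

lemma Rl_orth: "orthl fs \<Longrightarrow> Rl fs v = v - 2 *\<^sub>R (\<Sum>f\<in>set fs. (v \<bullet> f) *\<^sub>R f)"
proof (induction fs)
  case Nil then show ?case by simp
next
  case (Cons f fs)
  note h = orthl_Cons[OF Cons.prems]
  let ?w = "v - 2 *\<^sub>R (\<Sum>g\<in>set fs. (v \<bullet> g) *\<^sub>R g)"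
  have fw: "f \<bullet> ?w = f \<bullet> v"
  proof -
    have "f \<bullet> (\<Sum>g\<in>set fs. (v \<bullet> g) *\<^sub>R g) = 0"
      using h by (simp add: inner_sum_right)
    then show ?thesis by (simp add: inner_diff_right)
  qed
  have "Rl (f # fs) v = rfl f ?w" using Cons h by simp
  also have "\<dots> = ?w - (2 * (f \<bullet> v)) *\<^sub>R f" unfolding rfl_def fw ..
  also have "\<dots> = v - 2 *\<^sub>R (\<Sum>g\<in>set (f # fs). (v \<bullet> g) *\<^sub>R g)"
    using h by (simp add: algebra_simps inner_commute)
  finally show ?case .
qed

lemma ax: "axis i 1 \<bullet> f = f $ i"
  by (simp add: inner_commute inner_axis)

lemma eigen_lift:
  fixes T :: "real^('m::{finite,linorder}) \<Rightarrow> real^('m::{finite,linorder})"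
  assumes ot: "orthogonal_transformation T" and inv: "\<And>v. T (T v) = v"
  shows "\<exists>fs. orthl fs \<and> Rl fs = T \<and> trace (matrix T) = real CARD('m) - 2 * real (length fs)"
proof -
  have lin: "linear T" using ot by (rule orthogonal_transformation_linear)
  have ip: "T v \<bullet> T w = v \<bullet> w" for v w using ot unfolding orthogonal_transformation_def by blast
  let ?E = "{v. T v = - v}"
  have sub: "subspace ?E"
    unfolding subspace_def using lin by (simp add: linear_0 linear_add linear_cmul)
  obtain B where B: "B \<subseteq> ?E" "pairwise orthogonal B" "\<And>x. x \<in> B \<Longrightarrow> norm x = 1"
      "independent B" "card B = dim ?E" "span B = ?E"
    by (rule orthonormal_basis_subspace[OF sub]) simp
  have fin: "finite B" using B(4) by (rule finiteI_independent)
  obtain fs where fs: "set fs = B" "distinct fs" using finite_distinct_list[OF fin] by blast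
  have ofs: "orthl fs"
    unfolding orthl_def unitl_def using fs B(2,3) unfolding pairwise_def orthogonal_def by auto
  have proj: "(\<Sum>f\<in>B. (v \<bullet> f) *\<^sub>R f) = (1/2) *\<^sub>R (v - T v)" for v
  proof -
    let ?w = "(1/2) *\<^sub>R (v - T v)"
    have "T ?w = - ?w" using lin inv by (simp add: linear_cmul linear_diff)
    then have wsp: "?w \<in> span B" using B(6) by simp
    have exp: "(\<Sum>f\<in>B. (?w \<bullet> f) *\<^sub>R f) = ?w"
      using orthonormal_basis_expand[OF B(2) _ wsp fin] B(3) by blast
    have "v \<bullet> f = ?w \<bullet> f" if f: "f \<in> B" for f
    proof -
      have "T f = - f" using B(1) f by auto
      then have "T v \<bullet> f = - (v \<bullet> f)" using ip[of v f] by simp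
      then show ?thesis by (simp add: inner_diff_left)
    qed
    then have "(\<Sum>f\<in>B. (v \<bullet> f) *\<^sub>R f) = (\<Sum>f\<in>B. (?w \<bullet> f) *\<^sub>R f)" by (intro sum.cong refl) simp
    then show ?thesis using exp by simp
  qed
  have RT: "Rl fs = T"
  proof (rule ext)
    fix v
    show "Rl fs v = T v" unfolding Rl_orth[OF ofs] fs(1) proj by (simp add: algebra_simps)
  qed
  have tr: "trace (matrix T) = (\<Sum>i\<in>UNIV. 1 - 2 * (\<Sum>f\<in>B. f $ i * f $ i))"
    unfolding trace_def matrix_def
    by (intro sum.cong refl) (simp add: RT[symmetric] Rl_orth[OF ofs] fs(1) ax sum_component)
  also have "\<dots> = real CARD('m) - 2 * (\<Sum>f\<in>B. \<Sum>i\<in>UNIV. f $ i * f $ i)"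
    by (simp add: sum_subtractf sum_distrib_left[symmetric] sum.swap[of _ B])
  also have "(\<Sum>f\<in>B. \<Sum>i\<in>UNIV. f $ i * f $ i) = (\<Sum>f\<in>B. 1)"
  proof (intro sum.cong refl)
    fix f assume "f \<in> B"
    then have "f \<bullet> f = 1" using B(3) by (simp add: dot_square_norm)
    then show "(\<Sum>i\<in>UNIV. f $ i * f $ i) = 1" by (simp add: inner_vec_def)
  qed
  also have "\<dots> = real (length fs)" using fs distinct_card by fastforce
  finally show ?thesis using ofs RT by blast
qed



lemma tr_braid: "transp i (Suc i) \<circ> transp (Suc i) (Suc (Suc i)) \<circ> (transp i (Suc i) \<circ> transp (Suc i) (Suc (Suc i)))
   \<circ> (transp i (Suc i) \<circ> transp (Suc i) (Suc (Suc i))) = id"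
  by (rule ext) (simp add: transp_def Transposition.transpose_def)

lemma tr_conj: "transp (Suc i) (Suc (Suc i)) = transp i (Suc i) \<circ> (transp (Suc i) (Suc (Suc i)) \<circ> (transp i (Suc i) \<circ> (transp (Suc i) (Suc (Suc i)) \<circ> transp i (Suc i))))"
  by (rule ext) (simp add: transp_def Transposition.transpose_def)

lemma tr_inv: "transp i j \<circ> transp i j = id"
  unfolding transp_def by (rule transpose_comp_involutory)

lemma tr_perm: "i \<in> {1..n} \<Longrightarrow> j \<in> {1..n} \<Longrightarrow> transp i j permutes {1..n}"
  unfolding transp_def by (rule permutes_swap_id)

context
  fixes n :: nat and \<pi> :: "(nat \<Rightarrow> nat) \<Rightarrow> real^('m::{finite,linorder}) \<Rightarrow> real^('m::{finite,linorder})"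
  assumes rep: "orth_rep n \<pi>"
begin

lemma rep_orth: "\<sigma> permutes {1..n} \<Longrightarrow> orthogonal_transformation (\<pi> \<sigma>)"
  using rep unfolding orth_rep_def by blast

lemma rep_mult: "\<sigma> permutes {1..n} \<Longrightarrow> \<tau> permutes {1..n} \<Longrightarrow> \<pi> (\<sigma> \<circ> \<tau>) = \<pi> \<sigma> \<circ> \<pi> \<tau>"
  using rep unfolding orth_rep_def by blast

lemma rep_id: "\<pi> id = id"
proof (rule ext)
  fix v
  have p: "id permutes {1..n}" by (rule permutes_id)
  have "\<pi> id = \<pi> id \<circ> \<pi> id" using rep_mult[OF p p] by simp
  then have "\<pi> id (\<pi> id v) = \<pi> id v" by (metis comp_apply)
  moreover have "inj (\<pi> id)" using rep_orth[OF p] by (rule orthogonal_transformation_inj)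
  ultimately show "\<pi> id v = id v" by (simp add: inj_eq)
qed

lemma s_perm: "i \<in> {1..n-1} \<Longrightarrow> transp i (Suc i) permutes {1..n}"
  by (rule tr_perm) auto

lemma s_inv: "i \<in> {1..n-1} \<Longrightarrow> \<pi> (transp i (Suc i)) (\<pi> (transp i (Suc i)) v) = v"
proof -
  assume i: "i \<in> {1..n-1}"
  have "\<pi> (transp i (Suc i) \<circ> transp i (Suc i)) = id" unfolding tr_inv rep_id ..
  then show ?thesis using rep_mult[OF s_perm[OF i] s_perm[OF i]] by (metis comp_apply id_apply)
qed

lemma s_braid:
  assumes i: "i \<in> {1..n-2}"
  shows "(\<pi> (transp i (Suc i)) \<circ> \<pi> (transp (Suc i) (Suc (Suc i)))) \<circ> (\<pi> (transp i (Suc i)) \<circ> \<pi> (transp (Suc i) (Suc (Suc i))))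
     \<circ> (\<pi> (transp i (Suc i)) \<circ> \<pi> (transp (Suc i) (Suc (Suc i)))) = id"
proof -
  have a: "transp i (Suc i) permutes {1..n}" using i by (intro s_perm) auto
  have b: "transp (Suc i) (Suc (Suc i)) permutes {1..n}" using i by (intro s_perm) auto
  have ab: "transp i (Suc i) \<circ> transp (Suc i) (Suc (Suc i)) permutes {1..n}" by (rule permutes_compose[OF b a])
  have aab: "transp i (Suc i) \<circ> transp (Suc i) (Suc (Suc i)) \<circ> (transp i (Suc i) \<circ> transp (Suc i) (Suc (Suc i))) permutes {1..n}"
    by (rule permutes_compose[OF ab ab])
  have "\<pi> (transp i (Suc i) \<circ> transp (Suc i) (Suc (Suc i)) \<circ> (transp i (Suc i) \<circ> transp (Suc i) (Suc (Suc i)))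
   \<circ> (transp i (Suc i) \<circ> transp (Suc i) (Suc (Suc i)))) = id" unfolding tr_braid rep_id ..
  then show ?thesis unfolding rep_mult[OF aab ab] rep_mult[OF ab ab] rep_mult[OF a b] .
qed

lemma s_trace:
  assumes "i \<in> {1..n-1}"
  shows "character \<pi> (transp i (Suc i)) = character \<pi> (transp 1 2)"
  using assms
proof (induction i)
  case 0 then show ?case by simp
next
  case (Suc i)
  show ?case
  proof (cases "i = 0")
    case True then show ?thesis by (simp add: numeral_2_eq_2)
  next
    case False
    then have i: "i \<in> {1..n-1}" using Suc.prems by auto
    have si: "Suc i \<in> {1..n-1}" using Suc.prems by auto
    let ?a = "transp i (Suc i)" and ?b = "transp (Suc i) (Suc (Suc i))"
    have a: "?a permutes {1..n}" by (rule s_perm[OF i])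
    have b: "?b permutes {1..n}" by (rule s_perm[OF si])
    have la: "linear (\<pi> ?a)" by (rule orthogonal_transformation_linear[OF rep_orth[OF a]])
    have lb: "linear (\<pi> ?b)" by (rule orthogonal_transformation_linear[OF rep_orth[OF b]])
    let ?A = "matrix (\<pi> ?a)" and ?B = "matrix (\<pi> ?b)"
    have AA: "?A ** ?A = mat 1"
    proof -
      have "\<pi> ?a \<circ> \<pi> ?a = id" by (intro ext) (simp add: s_inv[OF i])
      then show ?thesis using matrix_compose[OF la la] by (simp add: matrix_id_mat_1)
    qed
    have BB: "?B ** ?B = mat 1"
    proof -
      have "\<pi> ?b \<circ> \<pi> ?b = id" by (intro ext) (simp add: s_inv[OF si])
      then show ?thesis using matrix_compose[OF lb lb] by (simp add: matrix_id_mat_1)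
    qed
    have "\<pi> ?b = \<pi> ?a \<circ> (\<pi> ?b \<circ> (\<pi> ?a \<circ> (\<pi> ?b \<circ> \<pi> ?a)))"
    proof -
      have p1: "?b \<circ> ?a permutes {1..n}" by (rule permutes_compose[OF a b])
      have p2: "?a \<circ> (?b \<circ> ?a) permutes {1..n}" by (rule permutes_compose[OF p1 a])
      have p3: "?b \<circ> (?a \<circ> (?b \<circ> ?a)) permutes {1..n}" by (rule permutes_compose[OF p2 b])
      show ?thesis
        by (subst tr_conj) (simp only: rep_mult[OF a p3] rep_mult[OF b p2] rep_mult[OF a p1] rep_mult[OF b a])
    qed
    then have "?B = matrix (\<pi> ?a \<circ> (\<pi> ?b \<circ> (\<pi> ?a \<circ> (\<pi> ?b \<circ> \<pi> ?a))))"
      by (rule arg_cong)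
    also have "\<dots> = ?A ** (?B ** (?A ** (?B ** ?A)))"
    proof -
      have l1: "linear (\<pi> ?b \<circ> \<pi> ?a)" by (rule linear_compose[OF la lb])
      have l2: "linear (\<pi> ?a \<circ> (\<pi> ?b \<circ> \<pi> ?a))" by (rule linear_compose[OF l1 la])
      have l3: "linear (\<pi> ?b \<circ> (\<pi> ?a \<circ> (\<pi> ?b \<circ> \<pi> ?a)))" by (rule linear_compose[OF l2 lb])
      show ?thesis by (simp only: matrix_compose[OF l3 la] matrix_compose[OF l2 lb] matrix_compose[OF l1 la] matrix_compose[OF la lb])
    qed
    finally have "?B = ?A ** (?B ** (?A ** (?B ** ?A)))" .
    then have "trace ?B = trace ((?B ** (?A ** (?B ** ?A))) ** ?A)"
      by (metis (no_types) trace_mul_sym[of ?A "?B ** (?A ** (?B ** ?A))"])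
    also have "\<dots> = trace (?B ** (?A ** ?B))"
      by (simp add: matrix_mul_assoc[symmetric] AA matrix_mul_rid)
    also have "\<dots> = trace ((?A ** ?B) ** ?B)"
      by (rule trace_mul_sym)
    also have "\<dots> = trace ?A"
      by (simp add: matrix_mul_assoc[symmetric] BB matrix_mul_rid)
    finally have "character \<pi> ?b = character \<pi> ?a" unfolding character_def .
    then show ?thesis using Suc.IH[OF i] by simp
  qed
qed

end



lemma cube_smul: "cl_cube (smul c a) = smul (c * c * c) (cl_cube a)"
  unfolding cl_cube_def by (simp add: smul_left smul_right mult.assoc)

lemma sq_smul: "cl_mult (smul c a) (smul c a) = smul (c * c) (cl_mult a a)"
  by (simp add: smul_left smul_right)

lemma Pin_cube: "x \<in> Pin \<Longrightarrow> cl_cube x \<in> Pin \<and> rho (cl_cube x) = rho x \<circ> rho x \<circ> rho x"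
  unfolding cl_cube_def by (simp add: Pin_mult rho_mult)

fun fixs :: "(nat \<Rightarrow> 'm::{finite,linorder} cl) \<Rightarrow> nat \<Rightarrow> 'm cl" where
  "fixs Y 0 = Y 0"
| "fixs Y (Suc i) = (if i = 0 then Y 1 else if cl_cube (cl_mult (fixs Y i) (Y (Suc i))) = cl_one then Y (Suc i) else smul (-1) (Y (Suc i)))"

lemma fixs_pm: "fixs Y i = Y i \<or> fixs Y i = smul (-1) (Y i)"
  by (cases i) auto

lemma smul_one_eq: "smul c (cl_one :: 'm::{finite,linorder} cl) = cl_one \<Longrightarrow> c = 1"
proof -
  assume "smul c (cl_one :: 'm cl) = cl_one"
  then have "smul c (cl_one :: 'm cl) {} = (cl_one :: 'm cl) {}" by simp
  then show ?thesis unfolding smul_def cl_one_def by simp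
qed

lemma neg_one_ne: "smul (-1) (cl_one :: 'm::{finite,linorder} cl) \<noteq> cl_one"
  using smul_one_eq[of "-1"] by force

theorem proposition3p1:
  fixes n :: nat and \<pi> :: "(nat \<Rightarrow> nat) \<Rightarrow> real^('m::{finite,linorder}) \<Rightarrow> real^('m::{finite,linorder})"
  assumes "n \<ge> 2" and "orth_rep n \<pi>"
  defines "g \<equiv> (character \<pi> id - character \<pi> (transp 1 2)) / 2"
  shows "(\<exists>x :: nat \<Rightarrow> ('m::{finite,linorder}) cl.
            (\<forall>i\<in>{1..n-1}. x i \<in> Pin \<and> rho (x i) = \<pi> (transp i (i+1))
                             \<and> cl_mult (x i) (x i) = cl_one) \<and>
            (\<forall>i\<in>{1..n-2}. cl_cube (cl_mult (x i) (x (i+1))) = cl_one))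
         \<longleftrightarrow> (\<exists>k::int. g = of_int k \<and> (k mod 4 = 0 \<or> k mod 4 = 3))"
proof -
  note rep = assms(2)
  note g_def = assms(3)
  let ?T = "\<lambda>i. \<pi> (transp i (Suc i))"
  have n1: "1 \<in> {1..n-1}" using assms(1) by auto
  have chid: "character \<pi> id = real CARD('m)"
    using rep_id[OF rep] by (simp add: character_def matrix_id_mat_1 trace_I)
  have lift: "\<exists>fs. orthl fs \<and> Rl fs = ?T i \<and> trace (matrix (?T i)) = real CARD('m) - 2 * real (length fs)"
    if i: "i \<in> {1..n-1}" for i
    by (rule eigen_lift[OF rep_orth[OF rep s_perm[OF rep i]]]) (simp add: s_inv[OF rep i])
  obtain fs1 where fs1: "orthl fs1" "Rl fs1 = ?T 1" "trace (matrix (?T 1)) = real CARD('m) - 2 * real (length fs1)"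
    using lift[OF n1] by blast
  define d where "d = length fs1"
  have u1: "unitl fs1" using fs1(1) unfolding orthl_def by blast
  have gd: "g = real d"
  proof -
    have "character \<pi> (transp 1 2) = trace (matrix (?T 1))" by (simp add: character_def numeral_2_eq_2)
    then show ?thesis unfolding g_def chid d_def fs1(3) by simp
  qed
  have y1a: "pl fs1 \<in> Pin" unfolding Pin_iff by (intro exI[of _ fs1] conjI u1 refl)
  have y1b: "rho (pl fs1) = ?T 1" using rho_pl[OF u1] fs1(2) by simp
  have y1c: "cl_mult (pl fs1) (pl fs1) = smul (ssg d) cl_one" unfolding d_def by (rule pl_sq[OF fs1(1)])
  show ?thesis
  proof
    assume "\<exists>x :: nat \<Rightarrow> 'm cl.
            (\<forall>i\<in>{1..n-1}. x i \<in> Pin \<and> rho (x i) = \<pi> (transp i (i+1))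
                             \<and> cl_mult (x i) (x i) = cl_one) \<and>
            (\<forall>i\<in>{1..n-2}. cl_cube (cl_mult (x i) (x (i+1))) = cl_one)"
    then obtain x :: "nat \<Rightarrow> 'm cl" where x: "\<forall>i\<in>{1..n-1}. x i \<in> Pin \<and> rho (x i) = \<pi> (transp i (i+1))
                             \<and> cl_mult (x i) (x i) = cl_one" by blast
    have x1: "x 1 \<in> Pin" "rho (x 1) = ?T 1" "cl_mult (x 1) (x 1) = cl_one" using x n1 by auto
    let ?z = "cl_mult (x 1) (ipl fs1)"
    have ui: "unitl (rev (map uminus fs1))" using u1 by simp
    have ipP: "ipl fs1 \<in> Pin" unfolding Pin_iff ipl_def by (intro exI[of _ "rev (map uminus fs1)"] conjI ui refl)
    have rip: "rho (ipl fs1) = Rl (rev (map uminus fs1))" unfolding ipl_def by (rule rho_pl[OF ui])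
    have zP: "?z \<in> Pin" by (rule Pin_mult[OF x1(1) ipP])
    have "rho ?z = id" unfolding rho_mult[OF x1(1) ipP] x1(2) rip fs1(2)[symmetric] by (rule Rl_inv[OF u1])
    then have z: "?z = cl_one \<or> ?z = smul (-1) cl_one" using kernel_Pin[OF zP] by blast
    have "x 1 = cl_mult ?z (pl fs1)" by (simp add: cl_assoc ipl_pl[OF u1])
    then have "x 1 = pl fs1 \<or> x 1 = smul (-1) (pl fs1)" using z by (auto simp: smul_left)
    then have "cl_mult (x 1) (x 1) = smul (ssg d) cl_one" using y1c by (auto simp: sq_smul)
    then have "smul (ssg d) (cl_one :: 'm cl) = cl_one" using x1(3) by simp
    then have "ssg d = 1" by (rule smul_one_eq)
    then have dm: "d mod 4 = 0 \<or> d mod 4 = 3" unfolding ssg_mod4 by (auto split: if_splits)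
    show "\<exists>k::int. g = of_int k \<and> (k mod 4 = 0 \<or> k mod 4 = 3)"
    proof (intro exI[of _ "int d"] conjI)
      show "g = of_int (int d)" using gd by simp
      show "int d mod 4 = 0 \<or> int d mod 4 = 3" using dm by presburger
    qed
  next
    assume "\<exists>k::int. g = of_int k \<and> (k mod 4 = 0 \<or> k mod 4 = 3)"
    then obtain k :: int where kk: "g = of_int k \<and> (k mod 4 = 0 \<or> k mod 4 = 3)" ..
    have k: "g = of_int k" "k mod 4 = 0 \<or> k mod 4 = 3" using kk by simp_all
    have "k = int d" using k(1) gd by simp
    then have "int (d mod 4) = k mod 4" by (simp add: of_nat_mod)
    then have "d mod 4 = 0 \<or> d mod 4 = 3" using k(2) by linarith
    then have sd1: "ssg d = 1" unfolding ssg_mod4 by simp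
    have Yex: "\<exists>y. y \<in> Pin \<and> rho y = ?T i \<and> cl_mult y y = cl_one" if i: "i \<in> {1..n-1}" for i
    proof -
      obtain fs where fs: "orthl fs" "Rl fs = ?T i" "trace (matrix (?T i)) = real CARD('m) - 2 * real (length fs)"
        using lift[OF i] by blast
      have "trace (matrix (?T i)) = trace (matrix (?T 1))"
        using s_trace[OF rep i] by (simp add: character_def numeral_2_eq_2)
      then have ld: "length fs = d" using fs(3) fs1(3) unfolding d_def by simp
      have u: "unitl fs" using fs(1) unfolding orthl_def by blast
      have "pl fs \<in> Pin" unfolding Pin_iff by (intro exI[of _ fs] conjI u refl)
      moreover have "rho (pl fs) = ?T i" using rho_pl[OF u] fs(2) by simp
      moreover have "cl_mult (pl fs) (pl fs) = cl_one" using pl_sq[OF fs(1)] ld sd1 by simp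
      ultimately show ?thesis by blast
    qed
    define Y where "Y i = (SOME y. y \<in> Pin \<and> rho y = ?T i \<and> cl_mult y y = cl_one)" for i
    have Yp: "Y i \<in> Pin \<and> rho (Y i) = ?T i \<and> cl_mult (Y i) (Y i) = cl_one" if i: "i \<in> {1..n-1}" for i
      unfolding Y_def by (rule someI_ex[OF Yex[OF i]])
    define x where "x = fixs Y"
    have xp: "x i \<in> Pin \<and> rho (x i) = ?T i \<and> cl_mult (x i) (x i) = cl_one" if i: "i \<in> {1..n-1}" for i
    proof -
      note yp = Yp[OF i]
      have "fixs Y i = Y i \<or> fixs Y i = smul (-1) (Y i)" by (rule fixs_pm)
      then show ?thesis
      proof
        assume "fixs Y i = Y i" then show ?thesis using yp unfolding x_def by simp
      next
        assume h: "fixs Y i = smul (-1) (Y i)"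
        have "smul (-1) (Y i) \<in> Pin \<and> rho (smul (-1) (Y i)) = rho (Y i)" using yp Pin_neg by blast
        then show ?thesis using yp h unfolding x_def by (simp add: sq_smul)
      qed
    qed
    have cube: "cl_cube (cl_mult (x i) (x (Suc i))) = cl_one" if i: "i \<in> {1..n-2}" for i
    proof -
      have i1: "i \<in> {1..n-1}" and i2: "Suc i \<in> {1..n-1}" using i by auto
      let ?w = "cl_mult (x i) (Y (Suc i))"
      have wP: "?w \<in> Pin" using xp[OF i1] Yp[OF i2] by (simp add: Pin_mult)
      have "rho ?w = ?T i \<circ> ?T (Suc i)" using xp[OF i1] Yp[OF i2] by (simp add: rho_mult)
      then have "rho (cl_cube ?w) = id" using Pin_cube[OF wP] s_braid[OF rep i] by (simp add: comp_assoc)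
      moreover have "cl_cube ?w \<in> Pin" using Pin_cube[OF wP] by blast
      ultimately have cw: "cl_cube ?w = cl_one \<or> cl_cube ?w = smul (-1) cl_one"
        using kernel_Pin by blast
      have xs: "x (Suc i) = (if cl_cube ?w = cl_one then Y (Suc i) else smul (-1) (Y (Suc i)))"
        using i unfolding x_def by simp
      show ?thesis
      proof (cases "cl_cube ?w = cl_one")
        case True then show ?thesis using xs by simp
      next
        case False
        then have "cl_cube ?w = smul (-1) cl_one" using cw by blast
        then show ?thesis using xs False by (simp add: smul_right cube_smul)
      qed
    qed
    show "\<exists>x :: nat \<Rightarrow> 'm cl.
            (\<forall>i\<in>{1..n-1}. x i \<in> Pin \<and> rho (x i) = \<pi> (transp i (i+1))
                             \<and> cl_mult (x i) (x i) = cl_one) \<and>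
            (\<forall>i\<in>{1..n-2}. cl_cube (cl_mult (x i) (x (i+1))) = cl_one)"
      using xp cube by (intro exI[of _ x]) auto
  qed
qed

end
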